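(* Let $\boldsymbol{x},\overline{\boldsymbol{x}}\in\mathbb{T}^3$ and $\boldsymbol{v}=(1,0,0)$, and let $\varepsilon>0$. For $\underline{\omega}=(\omega_1,\omega_2,\dots)$ with $\omega_i\in\Omega_0$ define $\boldsymbol{x}_0=\boldsymbol{x}$, $\boldsymbol{v}_0=\boldsymbol{v}$, $\boldsymbol{x}_n=f_{\omega_n}(\boldsymbol{x}_{n-1})$, $\boldsymbol{v}_n=\dfrac{D_{\boldsymbol{x}_{n-1}}f_{\omega_n}\boldsymbol{v}_{n-1}}{|D_{\boldsymbol{x}_{n-1}}f_{\omega_n}\boldsymbol{v}_{n-1}|}$. Then there exist $N_3\in\mathbb{N}$ and $\underline{\omega}^{N_3}=(\omega_1,\dots,\omega_{N_3})\in\Omega_0^{N_3}$ such that $$f_{\underline{\omega}^{N_3}}(\boldsymbol{x})=\overline{\boldsymbol{x}}\qquad\text{and}\qquad \boldsymbol{v}_{N_3}=(1,0,0).$$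
   Context: $\mathbb{T}^3=\mathbb{R}^3/(2\pi\mathbb{Z})^3$ with points $\boldsymbol{x}=(x,y,z)$. Fix $U>0$ and let $\Omega_0=[-U,U]^3\times[0,2\pi)^3$, with elements $\omega=(\mathsf{A},\mathsf{B},\mathsf{C},\alpha,\beta,\gamma)$. Define maps of $\mathbb{T}^3$: $f_{(\mathsf{A},\alpha)}(x,y,z)=(x+\mathsf{A}\sin(z+\alpha),\ y+\mathsf{A}\cos(z+\alpha),\ z)$, $f_{(\mathsf{B},\beta)}(x,y,z)=(x,\ y+\mathsf{B}\sin(x+\beta),\ z+\mathsf{B}\cos(x+\beta))$, $f_{(\mathsf{C},\gamma)}(x,y,z)=(x+\mathsf{C}\cos(y+\gamma),\ y,\ z+\mathsf{C}\sin(y+\gamma))$, and $f_\omega=f_{(\mathsf{C},\gamma)}\circ f_{(\mathsf{B},\beta)}\circ f_{(\mathsf{A},\alpha)}$. For $\underline{\omega}^N=(\omega_1,\dots,\omega_N)$, $f_{\underline{\omega}^N}=f_{\omega_N}\circ\cdots\circ f_{\omega_1}$; $D_{\boldsymbol{x}}f_\omega$ is the Jacobian of $f_\omega$ at $\boldsymbol{x}$. *)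

theory Defs
  imports "HOL-Analysis.Analysis"
begin

text \<open>Points of the torus T^3 are represented by lifts in R^3 (type real^3);
  two lifts represent the same torus point iff they differ componentwise by
  an integer multiple of 2 pi.\<close>

definition torus_eq :: "real^3 \<Rightarrow> real^3 \<Rightarrow> bool" where
  "torus_eq p q \<longleftrightarrow> (\<forall>i. \<exists>k::int. p$i - q$i = 2 * pi * of_int k)"

type_synonym param = "real \<times> real \<times> real \<times> real \<times> real \<times> real"

definition Omega0 :: "real \<Rightarrow> param set" where
  "Omega0 U = {(A,B,C,\<alpha>,\<beta>,\<gamma>). A \<in> {-U..U} \<and> B \<in> {-U..U} \<and> C \<in> {-U..U}
      \<and> \<alpha> \<in> {0..<2*pi} \<and> \<beta> \<in> {0..<2*pi} \<and> \<gamma> \<in> {0..<2*pi}}"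

definition fA :: "real \<Rightarrow> real \<Rightarrow> real^3 \<Rightarrow> real^3" where
  "fA A \<alpha> p = vector [p$1 + A * sin (p$3 + \<alpha>), p$2 + A * cos (p$3 + \<alpha>), p$3]"

definition fB :: "real \<Rightarrow> real \<Rightarrow> real^3 \<Rightarrow> real^3" where
  "fB B \<beta> p = vector [p$1, p$2 + B * sin (p$1 + \<beta>), p$3 + B * cos (p$1 + \<beta>)]"

definition fC :: "real \<Rightarrow> real \<Rightarrow> real^3 \<Rightarrow> real^3" where
  "fC C \<gamma> p = vector [p$1 + C * cos (p$2 + \<gamma>), p$2, p$3 + C * sin (p$2 + \<gamma>)]"

definition f_om :: "param \<Rightarrow> real^3 \<Rightarrow> real^3" where
  "f_om \<omega> = (case \<omega> of (A,B,C,\<alpha>,\<beta>,\<gamma>) \<Rightarrow> fC C \<gamma> \<circ> fB B \<beta> \<circ> fA A \<alpha>)"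

definition Df :: "param \<Rightarrow> real^3 \<Rightarrow> real^3 \<Rightarrow> real^3" where
  "Df \<omega> x = frechet_derivative (f_om \<omega>) (at x)"

text \<open>One step of the projectivised derivative cocycle:
  (x_{n-1}, v_{n-1}) |-> (x_n, v_n).\<close>
definition tstep :: "param \<Rightarrow> (real^3) \<times> (real^3) \<Rightarrow> (real^3) \<times> (real^3)" where
  "tstep \<omega> xv = (let x = fst xv; v = snd xv in
      (f_om \<omega> x, (1 / norm (Df \<omega> x v)) *\<^sub>R Df \<omega> x v))"

text \<open>(x_N, v_N) after applying omega_1, ..., omega_N (list order, omega_1 first).\<close>
definition traj :: "param list \<Rightarrow> (real^3) \<times> (real^3) \<Rightarrow> (real^3) \<times> (real^3)" where
  "traj ws xv = fold tstep ws xv"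

end

theory Submission
  imports Defs
begin

definition red :: "real \<Rightarrow> real" where
  "red t = t - 2 * pi * of_int \<lfloor>t / (2 * pi)\<rfloor>"

lemma red_range: "0 \<le> red t \<and> red t < 2 * pi"
proof -
  have p: "2 * pi > 0" by simp
  have a: "of_int \<lfloor>t / (2 * pi)\<rfloor> \<le> t / (2 * pi)" by (rule of_int_floor_le)
  have b: "t / (2 * pi) < of_int \<lfloor>t / (2 * pi)\<rfloor> + 1" by (rule real_of_int_floor_add_one_gt)
  from mult_left_mono[OF a, of "2*pi"] have "2 * pi * of_int \<lfloor>t / (2 * pi)\<rfloor> \<le> t"
    by simp
  moreover from mult_strict_left_mono[OF b p] have "t < 2 * pi * of_int \<lfloor>t / (2 * pi)\<rfloor> + 2 * pi"
    by (simp add: algebra_simps)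
  ultimately show ?thesis unfolding red_def by simp
qed

lemma red_sin: "sin (c + red (t - c)) = sin t"
proof -
  have "c + red (t - c) = t + (2 * pi) * of_int (- \<lfloor>(t - c) / (2 * pi)\<rfloor>)"
    unfolding red_def by simp
  then show ?thesis by (simp only: sin_add sin_int_2pin cos_int_2pin)
qed

lemma red_cos: "cos (c + red (t - c)) = cos t"
proof -
  have "c + red (t - c) = t + (2 * pi) * of_int (- \<lfloor>(t - c) / (2 * pi)\<rfloor>)"
    unfolding red_def by simp
  then show ?thesis by (simp only: cos_add sin_int_2pin cos_int_2pin)
qed

abbreviation e1 :: "real^3" where "e1 \<equiv> vector [1,0,0]"

lemma e1_axis: "e1 = axis 1 1"
  by (simp add: vec_eq_iff forall_3 axis_def)

lemma norm_e1: "norm e1 = 1"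
  by (simp add: e1_axis)

lemma fB0: "fB 0 b = id"
  by (rule ext) (simp add: fB_def vec_eq_iff forall_3)

lemma fC0: "fC 0 b = id"
  by (rule ext) (simp add: fC_def vec_eq_iff forall_3)

lemma fA0: "fA 0 b = id"
  by (rule ext) (simp add: fA_def vec_eq_iff forall_3)

lemma fA_alt: "fA A a = (\<lambda>p. p + (A * sin (p$3 + a)) *\<^sub>R vector [1,0,0] + (A * cos (p$3 + a)) *\<^sub>R vector [0,1,0])"
  by (rule ext) (simp add: fA_def vec_eq_iff forall_3)

lemma fC_alt: "fC C a = (\<lambda>p. p + (C * cos (p$2 + a)) *\<^sub>R vector [1,0,0] + (C * sin (p$2 + a)) *\<^sub>R vector [0,0,1])"
  by (rule ext) (simp add: fC_def vec_eq_iff forall_3)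

lemma fA_deriv: "(fA A a has_derivative (\<lambda>h. h + (A * cos (p$3 + a) * h$3) *\<^sub>R vector [1,0,0] + (- A * sin (p$3 + a) * h$3) *\<^sub>R vector [0,1,0])) (at p)"
  unfolding fA_alt
  by (auto intro!: derivative_eq_intros bounded_linear_imp_has_derivative simp: algebra_simps)

lemma fC_deriv: "(fC C a has_derivative (\<lambda>h. h + (- C * sin (p$2 + a) * h$2) *\<^sub>R vector [1,0,0] + (C * cos (p$2 + a) * h$2) *\<^sub>R vector [0,0,1])) (at p)"
  unfolding fC_alt
  by (auto intro!: derivative_eq_intros bounded_linear_imp_has_derivative simp: algebra_simps)

lemma tstep_A: "tstep (A,0,0,a,0,0) (p, e1) = (fA A a p, e1)"
proof -
  have fo: "f_om (A,0,0,a,0,0) = fA A a" by (simp add: f_om_def fB0 fC0)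
  have "Df (A,0,0,a,0,0) p = (\<lambda>h. h + (A * cos (p$3 + a) * h$3) *\<^sub>R vector [1,0,0] + (- A * sin (p$3 + a) * h$3) *\<^sub>R vector [0,1,0])"
    unfolding Df_def fo using fA_deriv by (rule frechet_derivative_at[symmetric])
  then have "Df (A,0,0,a,0,0) p e1 = e1" by simp
  then show ?thesis by (simp add: tstep_def fo norm_e1)
qed

lemma tstep_C: "tstep (0,0,C,0,0,a) (p, e1) = (fC C a p, e1)"
proof -
  have fo: "f_om (0,0,C,0,0,a) = fC C a" by (simp add: f_om_def fB0 fA0)
  have "Df (0,0,C,0,0,a) p = (\<lambda>h. h + (- C * sin (p$2 + a) * h$2) *\<^sub>R vector [1,0,0] + (C * cos (p$2 + a) * h$2) *\<^sub>R vector [0,0,1])"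
    unfolding Df_def fo using fC_deriv by (rule frechet_derivative_at[symmetric])
  then have "Df (0,0,C,0,0,a) p e1 = e1" by simp
  then show ?thesis by (simp add: tstep_def fo norm_e1)
qed

lemma move_C: "p$2 = y \<Longrightarrow> tstep (0,0,t,0,0,red (pi/2 - y)) (p, e1) = (p + t *\<^sub>R vector [0,0,1], e1)"
  using red_sin[of y "pi/2"] red_cos[of y "pi/2"]
  by (simp add: tstep_C fC_def vec_eq_iff forall_3)

lemma move_Ax: "p$3 = z \<Longrightarrow> tstep (t,0,0,red (pi/2 - z),0,0) (p, e1) = (p + t *\<^sub>R vector [1,0,0], e1)"
  using red_sin[of z "pi/2"] red_cos[of z "pi/2"]
  by (simp add: tstep_A fA_def vec_eq_iff forall_3)

lemma move_Ay: "p$3 = z \<Longrightarrow> tstep (t,0,0,red (- z),0,0) (p, e1) = (p + t *\<^sub>R vector [0,1,0], e1)"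
  using red_sin[of z 0] red_cos[of z 0]
  by (simp add: tstep_A fA_def vec_eq_iff forall_3)

lemma iter:
  assumes "\<And>p. p$j = c \<Longrightarrow> tstep w (p, e1) = (p + d, e1)" and "d$j = 0"
  shows "p$j = c \<Longrightarrow> fold tstep (replicate n w) (p, e1) = (p + real n *\<^sub>R d, e1)"
proof (induction n arbitrary: p)
  case 0 then show ?case by simp
next
  case (Suc n)
  have "fold tstep (replicate (Suc n) w) (p, e1) = fold tstep (replicate n w) (p + d, e1)"
    using assms(1)[OF Suc.prems] by simp
  also have "\<dots> = (p + d + real n *\<^sub>R d, e1)"
    using Suc.IH[of "p + d"] Suc.prems assms(2) by simp
  finally show ?case by (simp add: algebra_simps)
qed

lemma split_amt:
  assumes "U > 0"
  shows "\<exists>n::nat. n > 0 \<and> \<bar>d / real n\<bar> \<le> U"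
proof -
  define n where "n = nat \<lceil>\<bar>d\<bar> / U\<rceil> + 1"
  have n0: "real n > 0" unfolding n_def by simp
  have "\<bar>d\<bar> / U \<le> real n" unfolding n_def by linarith
  then have "\<bar>d\<bar> \<le> U * real n" using assms by (simp add: field_simps)
  then have "\<bar>d\<bar> / real n \<le> U" using n0 by (simp add: field_simps)
  then show ?thesis using n0 by (intro exI[of _ n]) simp
qed

theorem lemma3p4:
  fixes U :: real and x xbar :: "real^3"
  assumes "U > 0"
  shows "\<exists>ws :: param list. set ws \<subseteq> Omega0 U
           \<and> torus_eq (fst (traj ws (x, vector [1,0,0]))) xbar
           \<and> snd (traj ws (x, vector [1,0,0])) = vector [1,0,0]"
proof -
  obtain n1 :: nat where n1: "n1 > 0" "\<bar>(xbar$3 - x$3) / real n1\<bar> \<le> U"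
    using split_amt[OF assms] by blast
  obtain n2 :: nat where n2: "n2 > 0" "\<bar>(xbar$1 - x$1) / real n2\<bar> \<le> U"
    using split_amt[OF assms] by blast
  obtain n3 :: nat where n3: "n3 > 0" "\<bar>(xbar$2 - x$2) / real n3\<bar> \<le> U"
    using split_amt[OF assms] by blast
  define t1 where "t1 = (xbar$3 - x$3) / real n1"
  define t2 where "t2 = (xbar$1 - x$1) / real n2"
  define t3 where "t3 = (xbar$2 - x$2) / real n3"
  define w1 :: param where "w1 = (0,0,t1,0,0,red (pi/2 - x$2))"
  define w2 :: param where "w2 = (t2,0,0,red (pi/2 - xbar$3),0,0)"
  define w3 :: param where "w3 = (t3,0,0,red (- xbar$3),0,0)"
  define ws where "ws = replicate n1 w1 @ replicate n2 w2 @ replicate n3 w3"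
  define d1 :: "real^3" where "d1 = t1 *\<^sub>R vector [0,0,1]"
  define d2 :: "real^3" where "d2 = t2 *\<^sub>R vector [1,0,0]"
  define d3 :: "real^3" where "d3 = t3 *\<^sub>R vector [0,1,0]"
  define p1 where "p1 = x + real n1 *\<^sub>R d1"
  define p2 where "p2 = p1 + real n2 *\<^sub>R d2"
  define p3 where "p3 = p2 + real n3 *\<^sub>R d3"
  have s1: "fold tstep (replicate n1 w1) (x, e1) = (p1, e1)"
    unfolding p1_def
    by (rule iter[where j=2 and c="x$2"]) (auto simp: w1_def d1_def move_C)
  have p1_3: "p1$3 = xbar$3" using n1 by (simp add: p1_def d1_def t1_def)
  have s2: "fold tstep (replicate n2 w2) (p1, e1) = (p2, e1)"
    unfolding p2_def
    by (rule iter[where j=3 and c="xbar$3"]) (auto simp: w2_def d2_def move_Ax p1_3)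
  have p2_3: "p2$3 = xbar$3" using p1_3 by (simp add: p2_def d2_def)
  have s3: "fold tstep (replicate n3 w3) (p2, e1) = (p3, e1)"
    unfolding p3_def
    by (rule iter[where j=3 and c="xbar$3"]) (auto simp: w3_def d3_def move_Ay p2_3)
  have tr: "traj ws (x, e1) = (p3, e1)"
    unfolding traj_def ws_def by (simp only: fold_append o_apply s1 s2 s3)
  have "p3 = xbar"
    using n1 n2 n3 by (simp add: p3_def p2_def p1_def d1_def d2_def d3_def t1_def t2_def t3_def vec_eq_iff forall_3)
  then have te: "torus_eq p3 xbar" unfolding torus_eq_def by (auto intro: exI[of _ 0])
  have b1: "-U \<le> t1 \<and> t1 \<le> U" using n1(2) unfolding t1_def by linarith
  have b2: "-U \<le> t2 \<and> t2 \<le> U" using n2(2) unfolding t2_def by linarith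
  have b3: "-U \<le> t3 \<and> t3 \<le> U" using n3(2) unfolding t3_def by linarith
  have om: "set ws \<subseteq> Omega0 U"
    using b1 b2 b3 assms red_range pi_gt_zero
    by (auto simp: ws_def w1_def w2_def w3_def Omega0_def)
  show ?thesis using tr te om by (intro exI[of _ ws]) simp
qed

end
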